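(* Suppose that every Lipschitz quaternion $(a,b,c,d)=a+bi+cj+dk$ with integer coordinates all $>1$ can be written as $p+q$ where $p$ and $q$ are Hurwitz primes lying in $Q=\{(a,b,c,d): a,b,c,d>0\}$. Then at least one of the sequences $k^2+k+1$ $(k=0,1,2,\dots)$ and $k^2+k+3$ $(k=0,1,2,\dots)$ contains infinitely many rational primes.
   Context: Quaternions $a+bi+cj+dk$ are written $(a,b,c,d)$, with norm $N(a,b,c,d)=a^2+b^2+c^2+d^2$. Lipschitz integers are quaternions $(a,b,c,d)$ with $a,b,c,d\in\mathbb{Z}$. Hurwitz integers (in the sense of this paper) are quaternions of the form $(a+\tfrac12,b+\tfrac12,c+\tfrac12,d+\tfrac12)$ with $a,b,c,d\in\mathbb{Z}$ (all four coordinates half-odd-integers). A quaternion prime is a Lipschitz or Hurwitz integer whose norm is a rational prime; a Hurwitz prime is a quaternion prime that is a Hurwitz integer. $Q$ denotes the set of quaternions with all four coordinates strictly positive. *)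

theory Defs
  imports Complex_Main "HOL-Computational_Algebra.Primes"
begin

type_synonym quat = "real \<times> real \<times> real \<times> real"

definition qadd :: "quat \<Rightarrow> quat \<Rightarrow> quat" where
  "qadd x y = (case x of (a,b,c,d) \<Rightarrow> case y of (a',b',c',d') \<Rightarrow> (a+a', b+b', c+c', d+d'))"

definition qnorm :: "quat \<Rightarrow> real" where
  "qnorm x = (case x of (a,b,c,d) \<Rightarrow> a^2 + b^2 + c^2 + d^2)"

definition lipschitz :: "quat \<Rightarrow> bool" where
  "lipschitz x = (case x of (a,b,c,d) \<Rightarrow> a \<in> \<int> \<and> b \<in> \<int> \<and> c \<in> \<int> \<and> d \<in> \<int>)"

text \<open>Hurwitz integers in the sense of the paper: all four coordinates half-odd-integers.\<close>
definition hurwitz :: "quat \<Rightarrow> bool" where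
  "hurwitz x = (case x of (a,b,c,d) \<Rightarrow>
     a - 1/2 \<in> \<int> \<and> b - 1/2 \<in> \<int> \<and> c - 1/2 \<in> \<int> \<and> d - 1/2 \<in> \<int>)"

definition quat_prime :: "quat \<Rightarrow> bool" where
  "quat_prime x = ((lipschitz x \<or> hurwitz x) \<and> (\<exists>p::nat. prime p \<and> qnorm x = real p))"

definition hurwitz_prime :: "quat \<Rightarrow> bool" where
  "hurwitz_prime x = (quat_prime x \<and> hurwitz x)"

definition inQ :: "quat \<Rightarrow> bool" where
  "inQ x = (case x of (a,b,c,d) \<Rightarrow> a > 0 \<and> b > 0 \<and> c > 0 \<and> d > 0)"

end

theory Submission
  imports Defs
begin

lemma L:
  fixes k K x c :: nat
  assumes "k < K" "c = 5 \<or> c = 7"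
    and "(\<Prod>i<K. (i^2-i+5)*(i^2-i+7)) dvd x" "2*K \<le> x"
  shows "\<not> prime ((x-k)^2+(x-k)+c)"
proof
  assume pr: "prime ((x-k)^2+(x-k)+c)"
  define g where "g = k^2-k+c"
  have "g dvd (k^2-k+5)*(k^2-k+7)" using assms(2) unfolding g_def by auto
  also have "\<dots> dvd (\<Prod>i<K. (i^2-i+5)*(i^2-i+7))"
    using assms(1) by (intro dvd_prodI) auto
  finally have gx: "g dvd x" using assms(3) by (rule dvd_trans)
  have kk: "k \<le> k^2" by (simp add: power2_eq_square)
  have kx: "2*k \<le> x+1" "k \<le> x" using assms by auto
  have "int ((x-k)^2+(x-k)+c) = int (g + x*(x+1-2*k))"
  proof -
    have e1: "int (x-k) = int x - int k" using kx by simp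
    have e2: "int (k^2-k+c) = int k^2 - int k + int c" using kk by (simp add: of_nat_diff)
    have e3: "int (x+1-2*k) = int x + 1 - 2*int k" using kx by simp
    show ?thesis unfolding g_def of_nat_add of_nat_mult of_nat_power e1 e2 e3
      by (simp add: power2_eq_square algebra_simps)
  qed
  hence eq: "(x-k)^2+(x-k)+c = g + x*(x+1-2*k)" by linarith
  have "g dvd (x-k)^2+(x-k)+c" unfolding eq using gx by auto
  with pr have "g = 1 \<or> g = (x-k)^2+(x-k)+c" by (simp add: prime_nat_iff)
  moreover have "g \<ge> 5" unfolding g_def using assms(2) kk by auto
  moreover have "x*(x+1-2*k) > 0" using assms by auto
  ultimately show False using eq by auto
qed

lemma coord3:
  fixes a b :: real
  assumes "a - 1/2 \<in> \<int>" "a > 0" "b > 0" "a + b = 2"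
  shows "\<exists>z::nat. z \<le> 1 \<and> a = 1/2 + real z \<and> b = 3/2 - real z"
proof -
  obtain z :: int where z: "a - 1/2 = of_int z" using assms(1) by (auto elim: Ints_cases)
  have "z \<ge> 0" "z \<le> 1" using z assms by linarith+
  hence "z = 0 \<or> z = 1" by auto
  thus ?thesis
  proof
    assume "z = 0" thus ?thesis using z assms by (intro exI[of _ 0]) auto
  next
    assume "z = 1" thus ?thesis using z assms by (intro exI[of _ 1]) auto
  qed
qed

lemma coord4:
  fixes a b :: real and x :: nat
  assumes "a - 1/2 \<in> \<int>" "a > 0" "b > 0" "a + b = real x + 1"
  shows "\<exists>j::nat. j \<le> x \<and> a = real j + 1/2 \<and> b = real (x-j) + 1/2"
proof -
  obtain z :: int where z: "a - 1/2 = of_int z" using assms(1) by (auto elim: Ints_cases)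
  have "z \<ge> 0" "z \<le> int x" using z assms by linarith+
  thus ?thesis using z assms
    by (intro exI[of _ "nat z"]) (auto simp: of_nat_diff)
qed

lemma sq1: "(z::nat) \<le> 1 \<Longrightarrow> (1/2 + real z)^2 = 1/4 + 2*real z"
  by (cases z) (auto simp: power2_eq_square)
lemma sq3: "(z::nat) \<le> 1 \<Longrightarrow> (3/2 - real z)^2 = 9/4 - 2*real z"
  by (cases z) (auto simp: power2_eq_square)

theorem mainTheorem3:
  assumes "\<forall>a b c d :: int. a > 1 \<and> b > 1 \<and> c > 1 \<and> d > 1 \<longrightarrow>
     (\<exists>p q. hurwitz_prime p \<and> inQ p \<and> hurwitz_prime q \<and> inQ q \<and>
        qadd p q = (of_int a, of_int b, of_int c, of_int d))"
  shows "infinite {k::nat. prime (k^2 + k + 1)} \<or> infinite {k::nat. prime (k^2 + k + 3)}"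
proof (rule ccontr)
  assume "\<not> ?thesis"
  then have f1: "finite {k::nat. prime (k^2 + k + 1)}" and f3: "finite {k::nat. prime (k^2 + k + 3)}"
    by simp_all
  obtain K1 where K1: "\<forall>k\<in>{k::nat. prime (k^2 + k + 1)}. k < K1"
    using f1 finite_nat_set_iff_bounded by blast
  obtain K3 where K3: "\<forall>k\<in>{k::nat. prime (k^2 + k + 3)}. k < K3"
    using f3 finite_nat_set_iff_bounded by blast
  define K where "K = max K1 K3"
  have B1: "k < K" if "prime (k^2+k+1)" for k
  proof -
    have "k < K1" using K1 that by blast
    thus ?thesis unfolding K_def by simp
  qed
  have B3: "k < K" if "prime (k^2+k+3)" for k
  proof -
    have "k < K3" using K3 that by blast
    thus ?thesis unfolding K_def by simp
  qed
  define P where "P = (\<Prod>i<K. (i^2-i+5)*(i^2-i+(7::nat)))"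
  have P0: "P > 0" unfolding P_def by (intro prod_pos) auto
  define x where "x = 2*(K+1)*P"
  have Px: "P dvd x" unfolding x_def by simp
  have x2: "x \<ge> 2*K+2"
  proof -
    have "2*(K+1)*1 \<le> 2*(K+1)*P" using P0 by (intro mult_le_mono2) auto
    thus ?thesis unfolding x_def by simp
  qed
  have LL: "k < K \<Longrightarrow> c = 5 \<or> c = 7 \<Longrightarrow> \<not> prime ((x-k)^2+(x-k)+c)" for k c
    using L[of k K c x] Px x2 unfolding P_def by auto
  have "int x + 1 > 1" using x2 by auto
  then obtain p q where pq: "hurwitz_prime p" "inQ p" "hurwitz_prime q" "inQ q"
      "qadd p q = (of_int 2, of_int 2, of_int 2, of_int (int x + 1))"
    using assms[rule_format, of 2 2 2 "int x + 1"] by auto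
  obtain a1 a2 a3 a4 where p: "p = (a1,a2,a3,a4)" by (cases p) auto
  obtain b1 b2 b3 b4 where q: "q = (b1,b2,b3,b4)" by (cases q) auto
  obtain Np where Np: "prime Np" "qnorm p = real Np"
    using pq(1) unfolding hurwitz_prime_def quat_prime_def by auto
  obtain Nq where Nq: "prime Nq" "qnorm q = real Nq"
    using pq(3) unfolding hurwitz_prime_def quat_prime_def by auto
  have hp: "a1 - 1/2 \<in> \<int>" "a2 - 1/2 \<in> \<int>" "a3 - 1/2 \<in> \<int>" "a4 - 1/2 \<in> \<int>"
    using pq(1) unfolding hurwitz_prime_def hurwitz_def p by auto
  have Qp: "a1 > 0" "a2 > 0" "a3 > 0" "a4 > 0" using pq(2) unfolding inQ_def p by auto
  have Qq: "b1 > 0" "b2 > 0" "b3 > 0" "b4 > 0" using pq(4) unfolding inQ_def q by auto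
  have sums: "a1+b1 = 2" "a2+b2 = 2" "a3+b3 = 2" "a4+b4 = real x + 1"
    using pq(5) unfolding qadd_def p q by auto
  obtain z1 where z1: "z1 \<le> 1" "a1 = 1/2 + real z1" "b1 = 3/2 - real z1"
    using coord3[OF hp(1) Qp(1) Qq(1) sums(1)] by blast
  obtain z2 where z2: "z2 \<le> 1" "a2 = 1/2 + real z2" "b2 = 3/2 - real z2"
    using coord3[OF hp(2) Qp(2) Qq(2) sums(2)] by blast
  obtain z3 where z3: "z3 \<le> 1" "a3 = 1/2 + real z3" "b3 = 3/2 - real z3"
    using coord3[OF hp(3) Qp(3) Qq(3) sums(3)] by blast
  obtain j where j: "j \<le> x" "a4 = real j + 1/2" "b4 = real (x-j) + 1/2"
    using coord4[OF hp(4) Qp(4) Qq(4) sums(4)] by blast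
  define y where "y = x - j"
  have b4: "b4 = real y + 1/2" using j(3) unfolding y_def .
  define m where "m = z1+z2+z3"
  have zz: "real z1 * real z1 = real z1" "real z2 * real z2 = real z2" "real z3 * real z3 = real z3"
    using z1(1) z2(1) z3(1) by (auto simp: le_Suc_eq)
  have m3: "m \<le> 3" using z1 z2 z3 unfolding m_def by auto
  have "real Np = real (j^2+j+1+2*m)"
    using Np(2) unfolding qnorm_def p m_def z1(2,3) z2(2,3) z3(2,3) j(2,3)
    by (simp add: zz power2_eq_square algebra_simps of_nat_diff)
  hence eNp: "Np = j^2+j+1+2*m" by linarith
  have "real Nq + 2*real m = real (y^2+y+7)"
    using Nq(2) unfolding qnorm_def q m_def z1(2,3) z2(2,3) z3(2,3) b4
    by (simp add: zz power2_eq_square algebra_simps of_nat_diff)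
  hence eNq0: "Nq + 2*m = y^2+y+7" by linarith
  have eNq: "Nq + 2*m = (x-j)^2+(x-j)+7" using eNq0 unfolding y_def .
  have jj: "x - (x - j) = j" using j(1) by simp
  have "m = 0 \<or> m = 1 \<or> m = 2 \<or> m = 3" using m3 by auto
  then show False
  proof (elim disjE)
    assume "m = 0"
    then have e: "Np = j^2+j+1" "Nq = (x-j)^2+(x-j)+7" using eNp eNq by auto
    have "prime (j^2+j+1)" using Np(1) e(1) by simp
    hence "j < K" by (rule B1)
    thus False using LL[of j 7] Nq(1) e(2) by auto
  next
    assume "m = 1"
    then have e: "Np = j^2+j+3" "Nq = (x-j)^2+(x-j)+5" using eNp eNq by auto
    have "prime (j^2+j+3)" using Np(1) e(1) by simp
    hence "j < K" by (rule B3)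
    thus False using LL[of j 5] Nq(1) e(2) by auto
  next
    assume "m = 2"
    then have e: "Np = (x-(x-j))^2+(x-(x-j))+5" "Nq = (x-j)^2+(x-j)+3" using eNp eNq jj by auto
    have "prime ((x-j)^2+(x-j)+3)" using Nq(1) e(2) by simp
    hence "x-j < K" by (rule B3)
    thus False using LL[of "x-j" 5] Np(1) e(1) by auto
  next
    assume "m = 3"
    then have e: "Np = (x-(x-j))^2+(x-(x-j))+7" "Nq = (x-j)^2+(x-j)+1" using eNp eNq jj by auto
    have "prime ((x-j)^2+(x-j)+1)" using Nq(1) e(2) by simp
    hence "x-j < K" by (rule B1)
    thus False using LL[of "x-j" 7] Np(1) e(1) by auto
  qed
qed

end
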